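(* Let $f\colon G\to G$ be a graph map with primitive transition matrix, and let $\widehat f\colon\widehat G\to\widehat G$ be its orientation lift to the oriented edge double. Then $\lambda_{\widehat f}=\lambda_f$, and $\widehat f$ has primitive transition matrix if and only if $f$ is not orientable.
   Context: A graph map sends vertices to vertices and edges to nondegenerate edge paths; its transition matrix has $(i,j)$ entry the number of times $f(e_j)$ crosses $e_i$ in either direction, and $\lambda_f$ denotes the spectral radius of this matrix. A nonnegative square matrix is primitive if some power has all entries positive. Fix an orientation of each edge of $G$. The oriented edge double is the graph $\widehat G$ with a map $p\colon\widehat G\to G$ bijective on vertices, with exactly two edges $e_+,e_-$ over each edge $e$ of $G$, where $p(e_+)=e$ and $p(e_-)=\overline e$ ($e$ reversed); orient $\widehat G$ by declaring each $e_\pm$ positive. Every edge path $\gamma$ in $G$ has a unique positive lift, i.e. an edge path in $\widehat G$ crossing edges only positively and projecting to $\gamma$. The orientation lift $\widehat f$ is the graph map sending $e_+$ to the positive lift of $f(e)$ and $e_-$ to the positive lift of $f(\overline e)$. A graph map is positively (resp. negatively) orientable if for some orientation of the graph every positive edge maps to an edge path crossing every edge positively (resp. negatively); it is orientable if it is positively or negatively orientable. *)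

theory Defs
  imports "HOL-Analysis.Analysis"
begin

text \<open>A finite graph is given by a finite vertex type 'v, a finite edge type 'e
  (loops and multiple edges allowed) and, for a fixed orientation of every edge,
  its initial vertex src e and terminal vertex tgt e.
  A directed edge is a pair (e, b): (e, True) is e crossed positively,
  (e, False) is e crossed negatively (i.e. e reversed).\<close>

type_synonym 'e dedge = "'e \<times> bool"

definition dsrc :: "('e \<Rightarrow> 'v) \<Rightarrow> ('e \<Rightarrow> 'v) \<Rightarrow> 'e dedge \<Rightarrow> 'v" where
  "dsrc src tgt d = (if snd d then src (fst d) else tgt (fst d))"

definition dtgt :: "('e \<Rightarrow> 'v) \<Rightarrow> ('e \<Rightarrow> 'v) \<Rightarrow> 'e dedge \<Rightarrow> 'v" where
  "dtgt src tgt d = (if snd d then tgt (fst d) else src (fst d))"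

definition is_path :: "('e \<Rightarrow> 'v) \<Rightarrow> ('e \<Rightarrow> 'v) \<Rightarrow> 'e dedge list \<Rightarrow> 'v \<Rightarrow> 'v \<Rightarrow> bool" where
  "is_path src tgt p u w \<longleftrightarrow> p \<noteq> [] \<and>
     dsrc src tgt (hd p) = u \<and> dtgt src tgt (last p) = w \<and>
     (\<forall>i. Suc i < length p \<longrightarrow> dtgt src tgt (p ! i) = dsrc src tgt (p ! Suc i))"

definition rev_path :: "'e dedge list \<Rightarrow> 'e dedge list" where
  "rev_path p = rev (map (\<lambda>(e, b). (e, \<not> b)) p)"

definition graph_map :: "('e \<Rightarrow> 'v) \<Rightarrow> ('e \<Rightarrow> 'v) \<Rightarrow> ('v \<Rightarrow> 'v) \<Rightarrow> ('e \<Rightarrow> 'e dedge list) \<Rightarrow> bool" where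
  "graph_map src tgt fv fe \<longleftrightarrow> (\<forall>e. is_path src tgt (fe e) (fv (src e)) (fv (tgt e)))"

definition map_dedge :: "('e \<Rightarrow> 'e dedge list) \<Rightarrow> 'e dedge \<Rightarrow> 'e dedge list" where
  "map_dedge fe d = (if snd d then fe (fst d) else rev_path (fe (fst d)))"

definition transition_matrix :: "('e::finite \<Rightarrow> 'e dedge list) \<Rightarrow> real^'e^'e" where
  "transition_matrix fe = (\<chi> i j. real (length (filter (\<lambda>d. fst d = i) (fe j))))"

definition matpow :: "'a::comm_ring_1^'n::finite^'n \<Rightarrow> nat \<Rightarrow> 'a^'n^'n" where
  "matpow A k = (((**) A) ^^ k) (mat 1)"

definition primitive :: "real^'n::finite^'n \<Rightarrow> bool" where
  "primitive A \<longleftrightarrow> (\<forall>i j. A $ i $ j \<ge> 0) \<and>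
     (\<exists>k\<ge>1. \<forall>i j. matpow A k $ i $ j > 0)"

definition cmatrix :: "real^'n::finite^'n \<Rightarrow> complex^'n^'n" where
  "cmatrix A = (\<chi> i j. complex_of_real (A $ i $ j))"

definition eigenvalues :: "real^'n::finite^'n \<Rightarrow> complex set" where
  "eigenvalues A = {z. \<exists>v. v \<noteq> 0 \<and> cmatrix A *v v = z *s v}"

definition spectral_radius :: "real^'n::finite^'n \<Rightarrow> real" where
  "spectral_radius A = Max (norm ` eigenvalues A)"

text \<open>The oriented edge double of (src, tgt): same vertices (p is the identity on
  vertices), edges 'e \<times> bool, where (e, True) = e_+ lies over e and
  (e, False) = e_- lies over e reversed; every edge of the double is oriented
  positively, so e_+ runs from src e to tgt e and e_- from tgt e to src e.\<close>
definition dbl_src :: "('e \<Rightarrow> 'v) \<Rightarrow> ('e \<Rightarrow> 'v) \<Rightarrow> 'e dedge \<Rightarrow> 'v" where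
  "dbl_src src tgt = dsrc src tgt"

definition dbl_tgt :: "('e \<Rightarrow> 'v) \<Rightarrow> ('e \<Rightarrow> 'v) \<Rightarrow> 'e dedge \<Rightarrow> 'v" where
  "dbl_tgt src tgt = dtgt src tgt"

definition pos_lift :: "'e dedge list \<Rightarrow> ('e dedge) dedge list" where
  "pos_lift p = map (\<lambda>d. (d, True)) p"

text \<open>Orientation lift: e_+ \<mapsto> positive lift of f(e), e_- \<mapsto> positive lift of f(e reversed).
  The vertex map is the same as that of f.\<close>
definition orient_lift :: "('e \<Rightarrow> 'e dedge list) \<Rightarrow> 'e dedge \<Rightarrow> ('e dedge) dedge list" where
  "orient_lift fe d = pos_lift (map_dedge fe d)"

text \<open>An orientation of G is given by ori :: 'e \<Rightarrow> bool: the positive direction of e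
  under ori is the directed edge (e, ori e).\<close>
definition positively_orientable :: "('e \<Rightarrow> 'e dedge list) \<Rightarrow> bool" where
  "positively_orientable fe \<longleftrightarrow> (\<exists>ori. \<forall>e. \<forall>d \<in> set (map_dedge fe (e, ori e)). snd d = ori (fst d))"

definition negatively_orientable :: "('e \<Rightarrow> 'e dedge list) \<Rightarrow> bool" where
  "negatively_orientable fe \<longleftrightarrow> (\<exists>ori. \<forall>e. \<forall>d \<in> set (map_dedge fe (e, ori e)). snd d \<noteq> ori (fst d))"

definition orientable :: "('e \<Rightarrow> 'e dedge list) \<Rightarrow> bool" where
  "orientable fe \<longleftrightarrow> positively_orientable fe \<or> negatively_orientable fe"

end

theory Submission
  imports Defs "HOL-Computational_Algebra.Polynomial"
begin

lemma det_poly: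
  fixes C :: "complex^'n::finite^'n"
  shows "\<exists>Q. \<forall>z. det (\<chi> i j. C$i$j - (if i = j then z else 0)) = poly Q z"
proof -
  define Q where "Q = (\<Sum>p\<in>{p. p permutes (UNIV::'n set)}. of_int (sign p) *
     (\<Prod>i\<in>UNIV. [: C$i$(p i), - (if i = p i then 1 else 0) :]))"
  have "det (\<chi> i j. C$i$j - (if i = j then z else 0)) = poly Q z" for z
    unfolding det_def Q_def poly_sum poly_mult poly_prod
    by (intro sum.cong refl arg_cong2[where f="(*)"] prod.cong) (auto simp: of_int_poly)
  then show ?thesis by blast
qed

lemma charmat_mult:
  fixes C :: "complex^'n::finite^'n"
  shows "(\<chi> i j. C$i$j - (if i = j then z else 0)) *v v = C *v v - z *s v"
proof -
  have "(\<Sum>j\<in>UNIV. (C$i$j - (if i = j then z else 0)) * v$j) = (\<Sum>j\<in>UNIV. C$i$j * v$j) - z * v$i" for i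
  proof -
    have "(\<Sum>j\<in>UNIV. (C$i$j - (if i = j then z else 0)) * v$j) = (\<Sum>j\<in>UNIV. C$i$j * v$j - (if i = j then z * v$j else 0))"
      by (intro sum.cong) (auto simp: algebra_simps)
    also have "\<dots> = (\<Sum>j\<in>UNIV. C$i$j * v$j) - z * v$i"
      by (simp add: sum_subtractf)
    finally show ?thesis .
  qed
  then show ?thesis by (simp add: vec_eq_iff matrix_vector_mult_def)
qed

lemma det_zero_iff_ker:
  fixes A :: "complex^'n::finite^'n"
  shows "det A = 0 \<longleftrightarrow> (\<exists>v. v \<noteq> 0 \<and> A *v v = 0)"
  using invertible_det_nz[of A] invertible_left_inverse[of A] matrix_left_invertible_ker[of A]
  by auto

lemma finite_eig:
  fixes C :: "complex^'n::finite^'n"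
  shows "finite {z. \<exists>v. v \<noteq> 0 \<and> C *v v = z *s v}"
proof -
  define B where "B z = (\<chi> i j. C$i$j - (if i = j then z else 0))" for z
  obtain Q where Q: "\<And>z. det (B z) = poly Q z" using det_poly[of C] unfolding B_def by blast
  have ev: "(\<exists>v. v \<noteq> 0 \<and> C *v v = z *s v) \<longleftrightarrow> det (B z) = 0" for z
    unfolding det_zero_iff_ker B_def charmat_mult by simp
  show ?thesis
  proof (cases "Q = 0")
    case False
    have "{z. \<exists>v. v \<noteq> 0 \<and> C *v v = z *s v} \<subseteq> {z. poly Q z = 0}"
      using ev Q by auto
    then show ?thesis using poly_roots_finite[OF False] finite_subset by blast
  next
    case True
    define R where "R = (\<Sum>i\<in>UNIV. \<Sum>j\<in>UNIV. norm (C$i$j))"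
    define z where "z = complex_of_real (1 + R)"
    have Rnn: "R \<ge> 0" unfolding R_def by (intro sum_nonneg) auto
    have nz: "norm z = 1 + R" unfolding z_def norm_of_real using Rnn by simp
    have "det (B z) = 0" using Q True by simp
    then obtain v where v: "v \<noteq> 0" "C *v v = z *s v" using ev by blast
    define m where "m = Max (range (\<lambda>j. norm (v$j)))"
    have "m \<in> range (\<lambda>j. norm (v$j))" unfolding m_def by (intro Max_in) auto
    then obtain i where im: "norm (v$i) = m" by auto
    have mge: "norm (v$j) \<le> m" for j unfolding m_def by (intro Max_ge) auto
    have mpos: "m > 0"
    proof (rule ccontr)
      assume "\<not> m > 0"
      then have "\<forall>j. v$j = 0" using mge by (metis norm_le_zero_iff order.trans not_le)
      then show False using v(1) by (simp add: vec_eq_iff)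
    qed
    have "z * v$i = (\<Sum>j\<in>UNIV. C$i$j * v$j)"
      using v(2) by (simp add: vec_eq_iff matrix_vector_mult_def)
    then have "norm z * m = norm (\<Sum>j\<in>UNIV. C$i$j * v$j)" using im by (metis norm_mult)
    also have "\<dots> \<le> (\<Sum>j\<in>UNIV. norm (C$i$j) * norm (v$j))"
      by (rule order.trans[OF norm_sum]) (simp add: norm_mult)
    also have "\<dots> \<le> (\<Sum>j\<in>UNIV. norm (C$i$j) * m)"
      by (intro sum_mono mult_left_mono mge) auto
    also have "\<dots> = (\<Sum>j\<in>UNIV. norm (C$i$j)) * m" by (simp add: sum_distrib_right)
    also have "\<dots> \<le> R * m" unfolding R_def
      by (intro mult_right_mono member_le_sum) (use mpos in \<open>auto intro: sum_nonneg\<close>)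
    finally have "(1 + R) * m \<le> R * m" using nz by simp
    then show ?thesis using mpos by (simp add: algebra_simps)
  qed
qed

lemma eig_bound:
  fixes N :: "real^'n::finite^'n"
  assumes nn: "\<And>i j. N$i$j \<ge> 0" and wpos: "\<And>i. w$i > 0" and wl: "w v* N = r *s w"
    and v: "v \<noteq> 0" "cmatrix N *v v = z *s v"
  shows "norm z \<le> r"
proof -
  have row: "norm z * norm (v$i) \<le> (\<Sum>j\<in>UNIV. N$i$j * norm (v$j))" for i
  proof -
    have "z * v$i = (\<Sum>j\<in>UNIV. complex_of_real (N$i$j) * v$j)"
      using v(2) by (simp add: vec_eq_iff matrix_vector_mult_def cmatrix_def)
    then have "norm z * norm (v$i) = norm (\<Sum>j\<in>UNIV. complex_of_real (N$i$j) * v$j)"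
      by (metis norm_mult)
    also have "\<dots> \<le> (\<Sum>j\<in>UNIV. norm (complex_of_real (N$i$j) * v$j))" by (rule norm_sum)
    also have "\<dots> = (\<Sum>j\<in>UNIV. N$i$j * norm (v$j))"
      using nn by (intro sum.cong) (auto simp: norm_mult)
    finally show ?thesis .
  qed
  have wsum: "(\<Sum>i\<in>UNIV. w$i * N$i$j) = r * w$j" for j
    using wl by (simp add: vec_eq_iff vector_matrix_mult_def)
  define S where "S = (\<Sum>i\<in>UNIV. w$i * norm (v$i))"
  have "norm z * S = (\<Sum>i\<in>UNIV. w$i * (norm z * norm (v$i)))"
    unfolding S_def by (simp add: sum_distrib_left algebra_simps)
  also have "\<dots> \<le> (\<Sum>i\<in>UNIV. w$i * (\<Sum>j\<in>UNIV. N$i$j * norm (v$j)))"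
    by (intro sum_mono mult_left_mono row) (use wpos in \<open>auto intro: less_imp_le\<close>)
  also have "\<dots> = (\<Sum>j\<in>UNIV. (\<Sum>i\<in>UNIV. w$i * N$i$j) * norm (v$j))"
    by (simp add: sum_distrib_left sum_distrib_right algebra_simps) (rule sum.swap)
  also have "\<dots> = r * S" unfolding S_def wsum by (simp add: sum_distrib_left algebra_simps)
  finally have le: "norm z * S \<le> r * S" .
  obtain i where "v$i \<noteq> 0" using v(1) by (auto simp: vec_eq_iff)
  then have "w$i * norm (v$i) > 0" using wpos[of i] by simp
  then have "S > 0" unfolding S_def
    by (rule order.strict_trans2) (intro member_le_sum, auto intro: mult_nonneg_nonneg less_imp_le[OF wpos])
  then show ?thesis using le by simp
qed

lemma spectral_radius_eqI:
  fixes N :: "real^'n::finite^'n"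
  assumes nn: "\<And>i j. N$i$j \<ge> 0" and wpos: "\<And>i. w$i > 0" and wl: "w v* N = r *s w"
    and x: "x \<noteq> 0" "N *v x = r *s x"
  shows "spectral_radius N = r"
proof -
  define v where "v = (\<chi> i. complex_of_real (x$i))"
  have "v \<noteq> 0" using x(1) by (auto simp: v_def vec_eq_iff)
  moreover have "cmatrix N *v v = complex_of_real r *s v"
  proof -
    have "(\<Sum>j\<in>UNIV. complex_of_real (N $ i $ j) * complex_of_real (x $ j)) =
      complex_of_real r * complex_of_real (x $ i)" for i
    proof -
      have "(\<Sum>j\<in>UNIV. N $ i $ j * x $ j) = r * x $ i"
        using x(2) by (simp add: vec_eq_iff matrix_vector_mult_def)
      then have "complex_of_real (\<Sum>j\<in>UNIV. N $ i $ j * x $ j) = complex_of_real (r * x $ i)" by simp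
      then show ?thesis by simp
    qed
    then show ?thesis by (auto simp: vec_eq_iff v_def cmatrix_def matrix_vector_mult_def)
  qed
  ultimately have rin: "complex_of_real r \<in> eigenvalues N" unfolding eigenvalues_def by blast
  have fin: "finite (eigenvalues N)" unfolding eigenvalues_def by (rule finite_eig)
  have bd: "norm z \<le> r" if "z \<in> eigenvalues N" for z
    using that eig_bound[OF nn wpos wl] unfolding eigenvalues_def by blast
  have "r \<ge> 0" using bd[OF rin] by simp
  then have "norm (complex_of_real r) = r" by simp
  then have "r \<in> norm ` eigenvalues N" using rin by (metis image_eqI)
  then show ?thesis unfolding spectral_radius_def
    using fin bd by (intro Max_eqI) auto
qed

lemma pf_brouwer:
  fixes N :: "real^'n::finite^'n"
  assumes nn: "\<And>i j. N$i$j \<ge> 0" and cs: "\<And>j. (\<Sum>i\<in>UNIV. N$i$j) > 0"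
  obtains x r where "\<And>i. x$i \<ge> 0" "(\<Sum>i\<in>UNIV. x$i) = 1" "N *v x = r *s x" "r > 0"
proof -
  define S where "S = {x::real^'n. (\<forall>i. 0 \<le> x$i) \<and> (\<Sum>i\<in>UNIV. x$i) = 1}"
  define \<sigma> where "\<sigma> x = (\<Sum>i\<in>UNIV. (N *v x)$i)" for x
  have \<sigma>_alt: "\<sigma> x = (\<Sum>j\<in>UNIV. (\<Sum>i\<in>UNIV. N$i$j) * x$j)" for x
    unfolding \<sigma>_def matrix_vector_mult_def by (simp add: sum_distrib_right) (rule sum.swap)
  have \<sigma>pos: "\<sigma> x > 0" if "x \<in> S" for x
  proof -
    from that have x0: "\<And>i. 0 \<le> x$i" and x1: "(\<Sum>i\<in>UNIV. x$i) = 1" by (auto simp: S_def)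
    obtain j where "x$j \<noteq> 0"
    proof (rule ccontr)
      assume "\<not> thesis"
      then have "\<forall>j. x$j = 0" using that by blast
      then show False using x1 by simp
    qed
    then have xj: "x$j > 0" using x0[of j] by simp
    have "0 < (\<Sum>i\<in>UNIV. N$i$j) * x$j" using cs[of j] xj by simp
    also have "\<dots> \<le> \<sigma> x" unfolding \<sigma>_alt
      by (intro member_le_sum) (auto intro!: mult_nonneg_nonneg sum_nonneg nn x0)
    finally show ?thesis .
  qed
  define f where "f x = (1 / \<sigma> x) *\<^sub>R (N *v x)" for x
  have cS: "compact S"
  proof -
    have "closed S" unfolding S_def
      by (intro closed_Collect_conj closed_Collect_all closed_Collect_le closed_Collect_eq continuous_intros)
    moreover have "bounded S"
    proof -
      have "S \<subseteq> cbox 0 1"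
      proof
        fix x assume "x \<in> S"
        then have x0: "\<And>i. 0 \<le> x$i" and x1: "(\<Sum>i\<in>UNIV. x$i) = 1" by (auto simp: S_def)
        have "x$i \<le> 1" for i using x1 member_le_sum[of i UNIV "\<lambda>i. x$i"] x0 by auto
        then show "x \<in> cbox 0 1" using x0 by (auto simp: mem_box_cart)
      qed
      then show ?thesis by (rule bounded_subset[OF bounded_cbox])
    qed
    ultimately show ?thesis by (simp add: compact_eq_bounded_closed)
  qed
  have cvS: "convex S"
    unfolding convex_def S_def
    by (auto simp: sum.distrib sum_distrib_left[symmetric] intro!: add_nonneg_nonneg mult_nonneg_nonneg)
  have neS: "S \<noteq> {}"
  proof -
    have "(\<chi> i. 1 / real CARD('n)) \<in> S" unfolding S_def by simp
    then show ?thesis by blast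
  qed
  have cN: "continuous_on S ((*v) N)"
    by (rule linear_continuous_on) (simp add: linear_conv_bounded_linear[symmetric] matrix_vector_mul_linear)
  have c\<sigma>: "continuous_on S \<sigma>"
    unfolding \<sigma>_def by (intro continuous_on_sum continuous_on_component cN)
  have ctf: "continuous_on S f"
    unfolding f_def
    by (intro continuous_on_scaleR continuous_on_divide continuous_on_const c\<sigma> cN)
       (use \<sigma>pos in force)
  have fS: "f \<in> S \<rightarrow> S"
  proof
    fix x assume xS: "x \<in> S"
    then have x0: "\<And>i. 0 \<le> x$i" by (auto simp: S_def)
    have "0 \<le> (N *v x)$i" for i unfolding matrix_vector_mult_def
      by (auto intro!: sum_nonneg mult_nonneg_nonneg nn x0)
    moreover have "(\<Sum>i\<in>UNIV. (f x)$i) = 1"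
      using \<sigma>pos[OF xS] unfolding f_def by (simp add: sum_divide_distrib[symmetric] \<sigma>_def)
    ultimately show "f x \<in> S" using \<sigma>pos[OF xS] unfolding S_def f_def by auto
  qed
  obtain x where xS: "x \<in> S" and fx: "f x = x" using brouwer[OF cS cvS neS ctf fS] by blast
  have "N *v x = \<sigma> x *s x"
  proof -
    have "\<sigma> x *s x = \<sigma> x *\<^sub>R f x" using fx by (simp add: scalar_mult_eq_scaleR)
    also have "\<dots> = N *v x" using \<sigma>pos[OF xS] unfolding f_def by simp
    finally show ?thesis by simp
  qed
  then show ?thesis using that xS \<sigma>pos[OF xS] unfolding S_def by blast
qed

lemma matpow_0[simp]: "matpow A 0 = mat 1" by (simp add: matpow_def)
lemma matpow_Suc: "matpow A (Suc k) = A ** matpow A k" by (simp add: matpow_def)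
lemma matpow_Suc': "matpow A (Suc k) = matpow A k ** A"
  by (induction k) (simp_all add: matpow_Suc matrix_mul_assoc)

lemma matpow_nonneg:
  fixes N :: "real^'n::finite^'n"
  assumes nn: "\<And>i j. N$i$j \<ge> 0"
  shows "matpow N k $ i $ j \<ge> 0"
proof (induction k arbitrary: i j)
  case 0 then show ?case by (simp add: mat_def)
next
  case (Suc k)
  have "matpow N (Suc k) $ i $ j = (\<Sum>l\<in>UNIV. N$i$l * matpow N k $ l $ j)"
    by (simp add: matpow_Suc matrix_matrix_mult_def)
  also have "\<dots> \<ge> 0" by (intro sum_nonneg mult_nonneg_nonneg nn Suc.IH)
  finally show ?case .
qed
fun wlk :: "('a \<Rightarrow> 'a \<Rightarrow> bool) \<Rightarrow> nat \<Rightarrow> 'a \<Rightarrow> 'a \<Rightarrow> bool" where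
  "wlk R 0 j i = (i = j)"
| "wlk R (Suc k) j i = (\<exists>l. R i l \<and> wlk R k j l)"

lemma wlk_add: "wlk R (a + b) j i \<longleftrightarrow> (\<exists>m. wlk R a j m \<and> wlk R b m i)"
  by (induction b arbitrary: i) auto

lemma sum_pos_iff:
  fixes f :: "'a \<Rightarrow> real"
  assumes "finite A" "\<And>x. x \<in> A \<Longrightarrow> f x \<ge> 0"
  shows "sum f A > 0 \<longleftrightarrow> (\<exists>x\<in>A. f x > 0)"
proof -
  have "sum f A \<ge> 0" using assms by (intro sum_nonneg) auto
  moreover have "sum f A = 0 \<longleftrightarrow> (\<forall>x\<in>A. f x = 0)" using sum_nonneg_eq_0_iff[OF assms] .
  ultimately show ?thesis using assms(2) by force
qed

lemma matpow_pos_iff: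
  fixes N :: "real^'n::finite^'n"
  assumes nn: "\<And>i j. N$i$j \<ge> 0"
  shows "matpow N k $ i $ j > 0 \<longleftrightarrow> wlk (\<lambda>i l. N$i$l > 0) k j i"
proof (induction k arbitrary: i)
  case 0
  then show ?case by (simp add: mat_def)
next
  case (Suc k)
  have e: "matpow N (Suc k) $ i $ j = (\<Sum>l\<in>UNIV. N$i$l * matpow N k $ l $ j)"
    by (simp add: matpow_Suc matrix_matrix_mult_def)
  have p: "(\<Sum>l\<in>UNIV. N$i$l * matpow N k $ l $ j) > 0 \<longleftrightarrow> (\<exists>l. N$i$l * matpow N k $ l $ j > 0)"
    by (subst sum_pos_iff) (auto intro!: mult_nonneg_nonneg nn matpow_nonneg)
  have q: "N$i$l * matpow N k $ l $ j > 0 \<longleftrightarrow> N$i$l > 0 \<and> matpow N k $ l $ j > 0" for l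
  proof -
    have "N$i$l \<ge> 0" "matpow N k $ l $ j \<ge> 0" using nn matpow_nonneg[OF nn] by auto
    then show ?thesis by (auto simp: zero_less_mult_iff)
  qed
  show ?case unfolding e p q wlk.simps Suc.IH ..
qed

lemma left_eig_pow:
  fixes N :: "real^'n::finite^'n"
  assumes "w v* N = r *s w"
  shows "w v* matpow N k = r ^ k *s w"
proof (induction k)
  case 0 then show ?case by simp
next
  case (Suc k)
  have "w v* matpow N (Suc k) = (w v* N) v* matpow N k"
    by (simp add: matpow_Suc vector_matrix_mul_assoc)
  also have "\<dots> = r *s (w v* matpow N k)" using assms by (simp add: scalar_vector_matrix_assoc)
  also have "\<dots> = r ^ Suc k *s w" using Suc by simp
  finally show ?case .
qed

definition cnt :: "'e dedge list \<Rightarrow> 'e dedge \<Rightarrow> nat" where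
  "cnt p d = length (filter (\<lambda>x. x = d) p)"

lemma mem_rev_path: "(i,c) \<in> set (rev_path p) \<longleftrightarrow> (i, \<not> c) \<in> set p"
proof (induction p)
  case Nil then show ?case by (simp add: rev_path_def)
next
  case (Cons a p)
  obtain e b where a: "a = (e,b)" by fastforce
  have "set (rev_path (a # p)) = insert (e, \<not> b) (set (rev_path p))"
    by (auto simp: rev_path_def a)
  then show ?case using Cons by (auto simp: a)
qed

lemma mem_map_dedge: "(i,c) \<in> set (map_dedge fe (l,b)) \<longleftrightarrow> (i, c = b) \<in> set (fe l)"
  by (cases b) (simp_all add: map_dedge_def mem_rev_path)

lemma TL_entry_gen:
  "transition_matrix (orient_lift fe) $ d $ d' = real (length (filter (\<lambda>x. x = d) (map_dedge fe d')))"
  by (simp add: transition_matrix_def orient_lift_def pos_lift_def filter_map o_def)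

lemma len_filter_pos: "0 < length (filter P xs) \<longleftrightarrow> (\<exists>x\<in>set xs. P x)"
  by (induction xs) auto

lemma TL_pos: "transition_matrix (orient_lift fe) $ d $ d' > 0 \<longleftrightarrow> d \<in> set (map_dedge fe d')"
  unfolding TL_entry_gen of_nat_0_less_iff len_filter_pos by simp

lemma TM_pos: "transition_matrix fe $ i $ l > 0 \<longleftrightarrow> (\<exists>c. (i,c) \<in> set (fe l))"
  unfolding transition_matrix_def vec_lambda_beta of_nat_0_less_iff len_filter_pos by force

lemma cnt_rev: "length (filter (\<lambda>x. x = (e,b)) (rev_path p)) = cnt p (e, \<not> b)"
  unfolding rev_path_def cnt_def
  by (induction p) auto

lemma TL_entry: "transition_matrix (orient_lift fe) $ (e,b) $ (l,c) = real (cnt (fe l) (e, b = c))"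
  unfolding TL_entry_gen
  by (cases c) (simp_all add: map_dedge_def cnt_rev cnt_def)

lemma len_fst: "length (filter (\<lambda>d. fst d = e) p) = cnt p (e,True) + cnt p (e,False)"
  unfolding cnt_def by (induction p) auto

lemma TM_entry: "transition_matrix fe $ e $ l = real (cnt (fe l) (e,True)) + real (cnt (fe l) (e,False))"
  by (simp add: transition_matrix_def len_fst)

lemma K1: "(\<Sum>b\<in>UNIV. transition_matrix (orient_lift fe) $ (e,b) $ (l,c)) = transition_matrix fe $ e $ l"
  by (cases c) (simp_all add: UNIV_bool TL_entry TM_entry[of fe])

lemma K2: "(\<Sum>c\<in>UNIV. transition_matrix (orient_lift fe) $ (e,b) $ (l,c)) = transition_matrix fe $ e $ l"
  by (cases b) (simp_all add: UNIV_bool TL_entry TM_entry[of fe])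

lemma sum_dedge: "(\<Sum>x\<in>(UNIV::('e::finite) dedge set). g x) = (\<Sum>e\<in>UNIV. \<Sum>b\<in>UNIV. g (e,b))"
proof -
  have "(\<Sum>x\<in>(UNIV::('e::finite) dedge set). g x) = (\<Sum>(e,b)\<in>UNIV \<times> UNIV. g (e,b))"
    by (simp only: UNIV_Times_UNIV case_prod_eta)
  also have "\<dots> = (\<Sum>e\<in>UNIV. \<Sum>b\<in>UNIV. g (e,b))"
    by (rule sum.cartesian_product[symmetric])
  finally show ?thesis .
qed

lemma prim_nn: "primitive N \<Longrightarrow> N$i$j \<ge> 0" by (simp add: primitive_def)

lemma prim_rows_cols:
  fixes N :: "real^'n::finite^'n"
  assumes "primitive N"
  shows "(\<Sum>l\<in>UNIV. N$i$l) > 0" and "(\<Sum>i\<in>UNIV. N$i$j) > 0"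
proof -
  have nn: "\<And>i j. N$i$j \<ge> 0" using assms by (simp add: primitive_def)
  obtain k where k: "k \<ge> 1" "\<And>i j. matpow N k $ i $ j > 0" using assms unfolding primitive_def by blast
  then obtain k' where k': "k = Suc k'" by (cases k) auto
  let ?R = "\<lambda>i l. N$i$l > 0"
  have w: "wlk ?R (Suc k') j i" for i j using k(2)[of i j] unfolding k' matpow_pos_iff[OF nn] .
  obtain l where "N$i$l > 0" using w[of j i] by auto
  then show "(\<Sum>l\<in>UNIV. N$i$l) > 0" using nn by (subst sum_pos_iff) auto
  have "wlk ?R (1 + k') j i" using w[of j i] by simp
  then obtain m where "wlk ?R 1 j m" unfolding wlk_add by blast
  then have "N$m$j > 0" by simp
  then show "(\<Sum>i\<in>UNIV. N$i$j) > 0" using nn by (subst sum_pos_iff) auto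
qed

lemma pf_primitive:
  fixes N :: "real^'n::finite^'n"
  assumes prim: "primitive N"
  obtains w x r where "\<And>i. w$i > 0" "w v* N = r *s w" "x \<noteq> 0" "N *v x = r *s x"
proof -
  have nn: "\<And>i j. N$i$j \<ge> 0" using prim by (simp add: primitive_def)
  obtain x r' where x0: "\<And>i. x$i \<ge> 0" and x1: "(\<Sum>i\<in>UNIV. x$i) = 1" and xe: "N *v x = r' *s x"
    using pf_brouwer[of N] nn prim_rows_cols(2)[OF prim] by metis
  have nnT: "\<And>i j. transpose N $i$j \<ge> 0" using nn by (simp add: transpose_def)
  have csT: "\<And>j. (\<Sum>i\<in>UNIV. transpose N $i$j) > 0" using prim_rows_cols(1)[OF prim] by (simp add: transpose_def)
  obtain w r where w0: "\<And>i. w$i \<ge> 0" and w1: "(\<Sum>i\<in>UNIV. w$i) = 1" and we': "transpose N *v w = r *s w"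
      and rpos: "r > 0"
    using pf_brouwer[of "transpose N", OF nnT csT] by blast
  have we: "w v* N = r *s w" using we' by simp
  obtain k where k: "k \<ge> 1" "\<And>i j. matpow N k $ i $ j > 0" using prim unfolding primitive_def by blast
  obtain i0 where i0: "w$i0 > 0"
  proof (rule ccontr)
    assume "\<not> thesis"
    then have "\<forall>i. w$i = 0" using that w0 by (metis less_eq_real_def)
    then show False using w1 by simp
  qed
  have wpos: "w$j > 0" for j
  proof -
    have "(w v* matpow N k)$j = (\<Sum>i\<in>UNIV. w$i * matpow N k $ i $ j)"
      by (simp add: vector_matrix_mult_def)
    also have "\<dots> > 0"
      using i0 k(2)[of i0 j] w0 matpow_nonneg[OF nn]
      by (subst sum_pos_iff) (auto intro!: mult_nonneg_nonneg exI[of _ i0] mult_pos_pos)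
    finally have "r ^ k * w$j > 0" using left_eig_pow[OF we, of k] by simp
    then show ?thesis using rpos by (simp add: zero_less_mult_iff)
  qed
  have xnz: "x \<noteq> 0" using x1 by auto
  obtain j0 where j0: "x$j0 > 0"
  proof (rule ccontr)
    assume "\<not> thesis"
    then have "\<forall>i. x$i = 0" using that x0 by (metis less_eq_real_def)
    then show False using x1 by simp
  qed
  have Spos: "inner w x > 0" unfolding inner_vec_def inner_real_def
  proof (subst sum_pos_iff)
    show "\<exists>i\<in>UNIV. w$i * x$i > 0" using wpos[of j0] j0 by (intro bexI[of _ j0]) auto
  qed (use wpos x0 in \<open>auto intro!: mult_nonneg_nonneg less_imp_le[OF wpos]\<close>)
  have "inner (w v* N) x = inner w (N *v x)" by (rule dot_lmul_matrix)
  then have "r * inner w x = r' * inner w x" unfolding we xe by (simp add: scalar_mult_eq_scaleR)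
  then have "r' = r" using Spos by simp
  then show ?thesis using that wpos we xnz xe by blast
qed

lemma part1:
  fixes fe :: "'e::finite \<Rightarrow> 'e dedge list"
  assumes prim: "primitive (transition_matrix fe)"
  shows "spectral_radius (transition_matrix (orient_lift fe)) = spectral_radius (transition_matrix fe)"
proof -
  define M where "M = transition_matrix fe"
  define L where "L = transition_matrix (orient_lift fe)"
  obtain w x r where wpos: "\<And>i. w$i > 0" and we: "w v* M = r *s w" and xnz: "x \<noteq> 0"
    and xe: "M *v x = r *s x"
    using pf_primitive[OF prim[folded M_def]] by blast
  have nnM: "\<And>i j. M$i$j \<ge> 0" by (simp add: M_def transition_matrix_def)
  have nnL: "\<And>i j. L$i$j \<ge> 0" by (simp add: L_def transition_matrix_def)
  have srM: "spectral_radius M = r" by (rule spectral_radius_eqI[OF nnM wpos we xnz xe])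
  define w' :: "real^('e dedge)" where "w' = (\<chi> d. w $ fst d)"
  define x' :: "real^('e dedge)" where "x' = (\<chi> d. x $ fst d)"
  have wpos': "\<And>i. w'$i > 0" by (simp add: w'_def wpos)
  have we': "w' v* L = r *s w'"
  proof (rule vec_eq_iff[THEN iffD2], rule allI)
    fix d :: "'e dedge"
    obtain l c where d: "d = (l,c)" by fastforce
    have "(w' v* L) $ d = (\<Sum>e\<in>UNIV. \<Sum>b\<in>UNIV. w$e * L $ (e,b) $ (l,c))"
      by (simp add: vector_matrix_mult_def sum_dedge w'_def d)
    also have "\<dots> = (\<Sum>e\<in>UNIV. w$e * M $ e $ l)"
      by (simp add: sum_distrib_left[symmetric] L_def M_def K1)
    also have "\<dots> = (w v* M) $ l" by (simp add: vector_matrix_mult_def)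
    also have "\<dots> = (r *s w') $ d" by (simp add: we w'_def d)
    finally show "(w' v* L) $ d = (r *s w') $ d" .
  qed
  have xe': "L *v x' = r *s x'"
  proof (rule vec_eq_iff[THEN iffD2], rule allI)
    fix d :: "'e dedge"
    obtain e b where d: "d = (e,b)" by fastforce
    have "(L *v x') $ d = (\<Sum>l\<in>UNIV. \<Sum>c\<in>UNIV. L $ (e,b) $ (l,c) * x$l)"
      by (simp add: matrix_vector_mult_def sum_dedge x'_def d)
    also have "\<dots> = (\<Sum>l\<in>UNIV. M $ e $ l * x$l)"
      by (simp add: sum_distrib_right[symmetric] L_def M_def K2)
    also have "\<dots> = (M *v x) $ e" by (simp add: matrix_vector_mult_def)
    also have "\<dots> = (r *s x') $ d" by (simp add: xe x'_def d)
    finally show "(L *v x') $ d = (r *s x') $ d" .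
  qed
  have xnz': "x' \<noteq> 0"
  proof
    assume "x' = 0"
    then have "x' $ (e,True) = 0" for e by simp
    then have "x $ e = 0" for e by (simp add: x'_def)
    then show False using xnz by (simp add: vec_eq_iff)
  qed
  have srL: "spectral_radius L = r" by (rule spectral_radius_eqI[OF nnL wpos' we' xnz' xe'])
  show ?thesis using srL srM by (simp add: L_def M_def)
qed

definition RG :: "('e \<Rightarrow> 'e dedge list) \<Rightarrow> 'e \<Rightarrow> 'e \<Rightarrow> bool" where
  "RG fe i l \<longleftrightarrow> (\<exists>c. (i,c) \<in> set (fe l))"

definition RL :: "('e \<Rightarrow> 'e dedge list) \<Rightarrow> 'e dedge \<Rightarrow> 'e dedge \<Rightarrow> bool" where
  "RL fe d d' \<longleftrightarrow> d \<in> set (map_dedge fe d')"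

lemma TM_R: "(\<lambda>i l. transition_matrix fe $ i $ l > 0) = RG fe"
  by (intro ext) (simp add: TM_pos RG_def)

lemma TL_R: "(\<lambda>i l. transition_matrix (orient_lift fe) $ i $ l > 0) = RL fe"
  by (intro ext) (simp add: TL_pos RL_def)

lemma RL_pair: "RL fe (i,c) (l,b) \<longleftrightarrow> (i, c = b) \<in> set (fe l)"
  by (simp add: RL_def mem_map_dedge)

lemma walk_flip: "wlk (RL fe) k (e,b) (e',b') \<Longrightarrow> wlk (RL fe) k (e,\<not>b) (e',\<not>b')"
proof (induction k arbitrary: e' b')
  case 0 then show ?case by simp
next
  case (Suc k)
  then obtain l1 l2 where "RL fe (e',b') (l1,l2)" "wlk (RL fe) k (e,b) (l1,l2)" by auto
  then have "RL fe (e',\<not>b') (l1,\<not>l2)" "wlk (RL fe) k (e,\<not>b) (l1,\<not>l2)"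
    using Suc.IH by (auto simp: RL_pair)
  then show ?case by auto
qed

lemma walk_lift: "wlk (RG fe) k e e' \<Longrightarrow> \<exists>b'. wlk (RL fe) k (e,b) (e',b')"
proof (induction k arbitrary: e')
  case 0 then show ?case by simp
next
  case (Suc k)
  then obtain l where l: "RG fe e' l" "wlk (RG fe) k e l" by auto
  obtain bl where bl: "wlk (RL fe) k (e,b) (l,bl)" using Suc.IH[OF l(2)] by blast
  obtain c where c: "(e',c) \<in> set (fe l)" using l(1) by (auto simp: RG_def)
  have "RL fe (e', c = bl) (l,bl)" using c by (cases bl) (simp_all add: RL_pair)
  then show ?case using bl by auto
qed

lemma prim_walks:
  fixes N :: "real^'n::finite^'n"
  assumes "primitive N"
  shows "\<exists>K\<ge>1. \<forall>i j. wlk (\<lambda>i l. N$i$l > 0) K j i"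
proof -
  have nn: "\<And>i j. N$i$j \<ge> 0" using assms by (simp add: primitive_def)
  show ?thesis using assms unfolding primitive_def matpow_pos_iff[OF nn] by blast
qed

lemma walks_prim:
  fixes N :: "real^'n::finite^'n"
  assumes nn: "\<And>i j. N$i$j \<ge> 0" and "K \<ge> 1" "\<And>i j. wlk (\<lambda>i l. N$i$l > 0) K j i"
  shows "primitive N"
  unfolding primitive_def matpow_pos_iff[OF nn] using assms by blast

lemma orientable_not_prim:
  fixes fe :: "'e::finite \<Rightarrow> 'e dedge list"
  assumes "orientable fe"
  shows "\<not> primitive (transition_matrix (orient_lift fe))"
proof
  assume "primitive (transition_matrix (orient_lift fe))"
  then obtain K where K0: "K \<ge> 1" "\<forall>i j. wlk (\<lambda>i l. 0 < transition_matrix (orient_lift fe) $ i $ l) K j i"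
    using prim_walks by blast
  then have K: "K \<ge> 1" "\<And>i j. wlk (RL fe) K j i" unfolding TL_R by blast+
  define e :: 'e where "e = undefined"
  show False
  proof (cases "positively_orientable fe")
    case True
    then obtain ori where H: "\<And>e. \<forall>d\<in>set (map_dedge fe (e, ori e)). snd d = ori (fst d)"
      unfolding positively_orientable_def by blast
    have inv: "wlk (RL fe) k (e, ori e) d' \<Longrightarrow> snd d' = ori (fst d')" for k d'
    proof (induction k arbitrary: d')
      case 0 then show ?case by simp
    next
      case (Suc k)
      then obtain l where l: "RL fe d' l" "wlk (RL fe) k (e, ori e) l" by auto
      have "l = (fst l, ori (fst l))" using Suc.IH[OF l(2)] by (cases l) auto
      then show ?case using l(1) H[of "fst l"] unfolding RL_def by metis
    qed
    show False using inv[OF K(2)[of "(e, ori e)" "(e, \<not> ori e)"]] by simp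
  next
    case False
    then have "negatively_orientable fe" using assms by (simp add: orientable_def)
    then obtain ori where H: "\<And>e. \<forall>d\<in>set (map_dedge fe (e, ori e)). snd d \<noteq> ori (fst d)"
      unfolding negatively_orientable_def by blast
    have inv: "wlk (RL fe) k (e, ori e) d' \<Longrightarrow> (snd d' = ori (fst d')) = even k" for k d'
    proof (induction k arbitrary: d')
      case 0 then show ?case by simp
    next
      case (Suc k)
      then obtain l where l: "RL fe d' l" "wlk (RL fe) k (e, ori e) l" by auto
      obtain i c where d': "d' = (i,c)" by fastforce
      obtain l1 l2 where l12: "l = (l1,l2)" by fastforce
      have ih: "(l2 = ori l1) = even k" using Suc.IH[OF l(2)] l12 by simp
      have mem: "(i, c = l2) \<in> set (fe l1)" using l(1) d' l12 by (simp add: RL_pair)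
      show ?case
      proof (cases "even k")
        case True
        then have "l2 = ori l1" using ih by simp
        then have "(i,c) \<in> set (map_dedge fe (l1, ori l1))" using mem by (simp add: mem_map_dedge)
        then have "c \<noteq> ori i" using H[of l1] by force
        then show ?thesis using True d' by simp
      next
        case odd: False
        then have "l2 = (\<not> ori l1)" using ih by simp
        moreover have "(c = (\<not> ori l1)) = ((\<not> c) = ori l1)" by auto
        ultimately have "(i, \<not> c) \<in> set (map_dedge fe (l1, ori l1))" using mem
          by (simp only: mem_map_dedge)
        then have "\<not> c \<noteq> ori i" using H[of l1] by force
        then show ?thesis using odd d' by simp
      qed
    qed
    show False
    proof (cases "even K")
      case True
      then show False using inv[OF K(2)[of "(e, ori e)" "(e, \<not> ori e)"]] by simp
    next
      case False
      then show False using inv[OF K(2)[of "(e, ori e)" "(e, ori e)"]] by simp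
    qed
  qed
qed


lemma not_orientable_prim:
  fixes fe :: "'e::finite \<Rightarrow> 'e dedge list"
  assumes primM: "primitive (transition_matrix fe)" and notor: "\<not> orientable fe"
  shows "primitive (transition_matrix (orient_lift fe))"
proof (rule ccontr)
  assume np: "\<not> primitive (transition_matrix (orient_lift fe))"
  have nnL: "\<And>i j. transition_matrix (orient_lift fe) $ i $ j \<ge> 0" by (simp add: transition_matrix_def)
  obtain K where K0: "K \<ge> 1" "\<forall>i j. wlk (\<lambda>i l. 0 < transition_matrix fe $ i $ l) K j i"
    using prim_walks[OF primM] by blast
  then have K: "K \<ge> 1" "\<And>i j. wlk (RG fe) K j i" unfolding TM_R by blast+
  define e0 :: 'e where "e0 = undefined"
  define d0 where "d0 = (e0, True)"
  have lift: "\<exists>b'. wlk (RL fe) K (e,b) (e',b')" for e b e' using walk_lift[OF K(2)] by blast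
  have NF: "\<not> (wlk (RL fe) L d0 (e0,True) \<and> wlk (RL fe) L d0 (e0,False))" for L
  proof
    assume hyp: "wlk (RL fe) L d0 (e0,True) \<and> wlk (RL fe) L d0 (e0,False)"
    have mid: "wlk (RL fe) L (e0,c1) (e0,c2)" for c1 c2
    proof -
      have h: "wlk (RL fe) L (e0,True) (e0,True)" "wlk (RL fe) L (e0,True) (e0,False)"
        using hyp unfolding d0_def by auto
      have "wlk (RL fe) L (e0,False) (e0,\<not>False)" "wlk (RL fe) L (e0,False) (e0,\<not>True)"
        using walk_flip[OF h(2)] walk_flip[OF h(1)] by auto
      then show ?thesis using h by (cases c1; cases c2) auto
    qed
    have all: "wlk (RL fe) (K + L + K) j i" for i j
    proof -
      obtain e b where j: "j = (e,b)" by fastforce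
      obtain e' b' where i: "i = (e',b')" by fastforce
      obtain c1 where c1: "wlk (RL fe) K (e,b) (e0,c1)" using lift by blast
      obtain g where g: "wlk (RL fe) K (e0,True) (e',g)" using lift by blast
      have g': "wlk (RL fe) K (e0,False) (e',\<not>g)" using walk_flip[OF g] by simp
      have last: "wlk (RL fe) K (e0, b' = g) (e',b')" using g g' by (cases "b' = g") auto
      have "wlk (RL fe) (K + L) (e,b) (e0, b' = g)" unfolding wlk_add using c1 mid by blast
      then show ?thesis unfolding wlk_add i j using last by blast
    qed
    have all': "\<And>i j. wlk (\<lambda>i l. 0 < transition_matrix (orient_lift fe) $ i $ l) (K + L + K) j i"
      unfolding TL_R by (rule all)
    have "1 \<le> K + L + K" using K(1) by simp
    then have "primitive (transition_matrix (orient_lift fe))"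
      by (rule walks_prim[OF nnL _ all'])
    then show False using np by blast
  qed
  have NF': "c = c'" if "wlk (RL fe) L d0 (e0,c)" "wlk (RL fe) L d0 (e0,c')" for L c c'
    using NF[of L] that by (cases c; cases c') auto
  have to0: "\<exists>g. \<forall>c. wlk (RL fe) K (i,c) (e0, c = g)" for i
  proof -
    obtain g where g: "wlk (RL fe) K (i,True) (e0,g)" using lift by blast
    have "wlk (RL fe) K (i,False) (e0,\<not>g)" using walk_flip[OF g] by simp
    then have "wlk (RL fe) K (i,c) (e0, c = g)" for c using g by (cases c) simp_all
    then have "\<forall>c. wlk (RL fe) K (i,c) (e0, c = g)" by blast
    then show ?thesis by blast
  qed
  have Uniq: "c = c'" if "wlk (RL fe) L d0 (i,c)" "wlk (RL fe) L d0 (i,c')" for L i c c'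
  proof -
    obtain g where g: "\<forall>c. wlk (RL fe) K (i,c) (e0, c = g)" using to0 by blast
    have "wlk (RL fe) (L + K) d0 (e0, c = g)" "wlk (RL fe) (L + K) d0 (e0, c' = g)"
      unfolding wlk_add using that g by blast+
    then have "(c = g) = (c' = g)" by (rule NF')
    then show ?thesis by auto
  qed
  define ori where "ori i = (SOME c. wlk (RL fe) K d0 (i,c))" for i
  define ori' where "ori' i = (SOME c. wlk (RL fe) (Suc K) d0 (i,c))" for i
  have ori: "wlk (RL fe) K d0 (i, ori i)" for i
    unfolding ori_def d0_def using lift by (rule someI_ex)
  have ori': "wlk (RL fe) (Suc K) d0 (i, ori' i)" for i
  proof -
    obtain K' where K': "K = Suc K'" using K(1) by (cases K) auto
    obtain l where "RG fe i l" using K(2)[of e0 i] unfolding K' by auto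
    then have "wlk (RG fe) (Suc K) e0 i" using K(2)[of e0 l] by auto
    then have "\<exists>c. wlk (RL fe) (Suc K) d0 (i,c)" unfolding d0_def by (rule walk_lift)
    then show ?thesis unfolding ori'_def by (rule someI_ex)
  qed
  have succ: "c = ori' i" if "RL fe (i,c) (l, ori l)" for i c l
  proof -
    have "wlk (RL fe) (Suc K) d0 (i,c)" using that ori[of l] by auto
    then show ?thesis using ori'[of i] by (rule Uniq)
  qed
  define \<phi>0 where "\<phi>0 = (SOME c. wlk (RL fe) (K + K) d0 (e0,c))"
  define \<phi>1 where "\<phi>1 = (SOME c. wlk (RL fe) (Suc K + K) d0 (e0,c))"
  have rel: "ori' i = (if \<phi>0 = \<phi>1 then ori i else \<not> ori i)" for i
  proof -
    obtain g where g: "\<forall>c. wlk (RL fe) K (i,c) (e0, c = g)" using to0 by blast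
    have h0: "wlk (RL fe) (K + K) d0 (e0, ori i = g)" unfolding wlk_add using ori g by blast
    have h1: "wlk (RL fe) (Suc K + K) d0 (e0, ori' i = g)" unfolding wlk_add using ori' g by blast
    have "wlk (RL fe) (K + K) d0 (e0, \<phi>0)" unfolding \<phi>0_def using h0 by (rule someI)
    then have p0: "\<phi>0 = (ori i = g)" using h0 by (rule NF')
    have "wlk (RL fe) (Suc K + K) d0 (e0, \<phi>1)" unfolding \<phi>1_def using h1 by (rule someI)
    then have p1: "\<phi>1 = (ori' i = g)" using h1 by (rule NF')
    show ?thesis using p0 p1 by auto
  qed
  have "orientable fe"
  proof (cases "\<phi>0 = \<phi>1")
    case True
    have "\<forall>e. \<forall>d\<in>set (map_dedge fe (e, ori e)). snd d = ori (fst d)"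
    proof (intro allI ballI)
      fix e d assume d: "d \<in> set (map_dedge fe (e, ori e))"
      obtain i c where dd: "d = (i,c)" by fastforce
      have "c = ori' i" using d dd succ unfolding RL_def by blast
      then show "snd d = ori (fst d)" using rel[of i] True dd by simp
    qed
    then show ?thesis unfolding orientable_def positively_orientable_def by blast
  next
    case False
    have "\<forall>e. \<forall>d\<in>set (map_dedge fe (e, ori e)). snd d \<noteq> ori (fst d)"
    proof (intro allI ballI)
      fix e d assume d: "d \<in> set (map_dedge fe (e, ori e))"
      obtain i c where dd: "d = (i,c)" by fastforce
      have "c = ori' i" using d dd succ unfolding RL_def by blast
      then show "snd d \<noteq> ori (fst d)" using rel[of i] False dd by simp
    qed
    then show ?thesis unfolding orientable_def negatively_orientable_def by blast
  qed
  then show False using notor by blast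
qed

theorem lemma2p4:
  fixes src tgt :: "'e::finite \<Rightarrow> 'v::finite"
    and fv :: "'v \<Rightarrow> 'v" and fe :: "'e \<Rightarrow> 'e dedge list"
  assumes "graph_map src tgt fv fe"
    and "primitive (transition_matrix fe)"
  shows "spectral_radius (transition_matrix (orient_lift fe)) = spectral_radius (transition_matrix fe)
         \<and> (primitive (transition_matrix (orient_lift fe)) \<longleftrightarrow> \<not> orientable fe)"
  using part1[OF assms(2)] orientable_not_prim not_orientable_prim[OF assms(2)] by blast

end
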